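(* Let $p$ be an odd prime and fix $\beta\in(1/p,1)$. Let $a_1,\dots,a_N\in\mathsf H$ with $a_j=(v_j,z_j)$, and let $\mu_W=N^{-1}\sum_{j}\delta_{v_j}$. Suppose $\mu_W(L)\le\beta$ for every hyperplane $L\le W$. Let $\nu=\frac1N\sum_{j=1}^Nu_{\langle a_j\rangle}$, where $u_{\langle a_j\rangle}$ is the uniform measure on the cyclic subgroup generated by $a_j$. Then the kernel $K=\frac12(R_\nu+L_\nu)$ on $\mathsf H$ has spectral gap, with respect to the uniform measure on $\mathsf H$, at least \[ \gamma_{p,\beta}=\min\left\{1-\beta,\ \frac{(1-\beta)^2}{2}(1-p^{-1/2})\right\}>0. \]
   Context: $W$ is a vector space of dimension $2m\ge2$ over $\mathbb F_p$ with a nondegenerate alternating bilinear form $\omega$; $\mathsf H=W\times\mathbb F_p$ with multiplication $(v,z)(w,t)=(v+w,\,z+t+\tfrac12\omega(v,w))$, $\tfrac12$ being the inverse of $2$ in $\mathbb F_p$. For a probability measure $\nu$ on $\mathsf H$, $R_\nu f(x)=\sum_{g}\nu(g)f(xg)$ and $L_\nu f(x)=\sum_g\nu(g)f(gx)$. The spectral gap of a reversible kernel $K$ with stationary law $\rho$ is the largest $\gamma$ with $\gamma\operatorname{Var}_\rho(f)\le\frac12\sum_{x,y}\rho(x)K(x,y)(f(x)-f(y))^2$ for all real $f$. *)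

theory Defs
  imports "HOL-Analysis.Analysis" "HOL-Library.Function_Algebras" "Berlekamp_Zassenhaus.Finite_Field"
begin

type_synonym ('n, 'p) vecW = "'n \<Rightarrow> 'p mod_ring"
type_synonym ('n, 'p) heis = "('n \<Rightarrow> 'p mod_ring) \<times> 'p mod_ring"

definition alt_form :: "(('n::finite, 'p::prime_card) vecW \<Rightarrow> ('n, 'p) vecW \<Rightarrow> 'p mod_ring) \<Rightarrow> bool" where
  "alt_form \<omega> \<longleftrightarrow>
     (\<forall>u v w. \<omega> (u + v) w = \<omega> u w + \<omega> v w) \<and>
     (\<forall>c v w. \<omega> (\<lambda>i. c * v i) w = c * \<omega> v w) \<and>
     (\<forall>u v w. \<omega> u (v + w) = \<omega> u v + \<omega> u w) \<and>
     (\<forall>c v w. \<omega> v (\<lambda>i. c * w i) = c * \<omega> v w) \<and>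
     (\<forall>v. \<omega> v v = 0) \<and>
     (\<forall>v. (\<forall>w. \<omega> v w = 0) \<longrightarrow> v = 0)"

definition hmul :: "(('n::finite, 'p::prime_card) vecW \<Rightarrow> ('n, 'p) vecW \<Rightarrow> 'p mod_ring)
    \<Rightarrow> ('n, 'p) heis \<Rightarrow> ('n, 'p) heis \<Rightarrow> ('n, 'p) heis" where
  "hmul \<omega> x y = (fst x + fst y, snd x + snd y + inverse 2 * \<omega> (fst x) (fst y))"

fun hpow :: "(('n::finite, 'p::prime_card) vecW \<Rightarrow> ('n, 'p) vecW \<Rightarrow> 'p mod_ring)
    \<Rightarrow> ('n, 'p) heis \<Rightarrow> nat \<Rightarrow> ('n, 'p) heis" where
  "hpow \<omega> a 0 = (0, 0)"
| "hpow \<omega> a (Suc k) = hmul \<omega> a (hpow \<omega> a k)"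

text \<open>The cyclic subgroup generated by a (H is finite, so positive powers suffice).\<close>
definition cyc :: "(('n::finite, 'p::prime_card) vecW \<Rightarrow> ('n, 'p) vecW \<Rightarrow> 'p mod_ring)
    \<Rightarrow> ('n, 'p) heis \<Rightarrow> ('n, 'p) heis set" where
  "cyc \<omega> a = range (hpow \<omega> a)"

definition unif :: "'a set \<Rightarrow> 'a \<Rightarrow> real" where
  "unif S g = (if g \<in> S then 1 / real (card S) else 0)"

definition subspW :: "('n::finite, 'p::prime_card) vecW set \<Rightarrow> bool" where
  "subspW L \<longleftrightarrow> 0 \<in> L \<and> (\<forall>u\<in>L. \<forall>v\<in>L. u + v \<in> L) \<and> (\<forall>c. \<forall>v\<in>L. (\<lambda>i. c * v i) \<in> L)"

definition hyperplaneW :: "('n::finite, 'p::prime_card) vecW set \<Rightarrow> bool" where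
  "hyperplaneW L \<longleftrightarrow> subspW L \<and> L \<noteq> UNIV \<and>
     (\<forall>M. subspW M \<and> L \<subseteq> M \<longrightarrow> M = L \<or> M = UNIV)"

text \<open>Right and left convolution kernels: R_nu f x = sum_g nu g f(xg), L_nu f x = sum_g nu g f(gx).\<close>
definition Rker :: "('a \<Rightarrow> 'a \<Rightarrow> 'a) \<Rightarrow> ('a \<Rightarrow> real) \<Rightarrow> 'a \<Rightarrow> 'a \<Rightarrow> real" where
  "Rker mul \<nu> x y = (\<Sum>g\<in>{g. mul x g = y}. \<nu> g)"

definition Lker :: "('a \<Rightarrow> 'a \<Rightarrow> 'a) \<Rightarrow> ('a \<Rightarrow> real) \<Rightarrow> 'a \<Rightarrow> 'a \<Rightarrow> real" where
  "Lker mul \<nu> x y = (\<Sum>g\<in>{g. mul g x = y}. \<nu> g)"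

definition variance_wrt :: "('a::finite \<Rightarrow> real) \<Rightarrow> ('a \<Rightarrow> real) \<Rightarrow> real" where
  "variance_wrt \<rho> f = (\<Sum>x\<in>UNIV. \<rho> x * (f x - (\<Sum>y\<in>UNIV. \<rho> y * f y))\<^sup>2)"

definition dirichlet :: "('a::finite \<Rightarrow> 'a \<Rightarrow> real) \<Rightarrow> ('a \<Rightarrow> real) \<Rightarrow> ('a \<Rightarrow> real) \<Rightarrow> real" where
  "dirichlet K \<rho> f = (1/2) * (\<Sum>x\<in>UNIV. \<Sum>y\<in>UNIV. \<rho> x * K x y * (f x - f y)\<^sup>2)"

definition spectral_gap :: "('a::finite \<Rightarrow> 'a \<Rightarrow> real) \<Rightarrow> ('a \<Rightarrow> real) \<Rightarrow> real" where
  "spectral_gap K \<rho> = Sup {\<gamma>. \<forall>f. \<gamma> * variance_wrt \<rho> f \<le> dirichlet K \<rho> f}"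

end

theory Submission imports Defs begin

definition sc :: "'a::times \<Rightarrow> ('n \<Rightarrow> 'a) \<Rightarrow> ('n \<Rightarrow> 'a)" where
  "sc c v = (\<lambda>i. c * v i)"

lemma sc_add_r: "sc (c::'a::comm_ring) (u + v) = sc c u + sc c v"
  by (simp add: sc_def fun_eq_iff algebra_simps)
lemma sc_add_l: "sc (c + d::'a::comm_ring) v = sc c v + sc d v"
  by (simp add: sc_def fun_eq_iff algebra_simps)
lemma sc_0[simp]: "sc (0::'a::comm_ring) v = 0" by (simp add: sc_def fun_eq_iff)
lemma sc_1[simp]: "sc (1::'a::comm_ring_1) v = v" by (simp add: sc_def fun_eq_iff)
lemma sc_z[simp]: "sc (c::'a::comm_ring) 0 = 0" by (simp add: sc_def fun_eq_iff)
lemma sc_sc: "sc (c::'a::comm_ring) (sc d v) = sc (c*d) v" by (simp add: sc_def fun_eq_iff algebra_simps)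
lemma sc_neg: "sc (-c::'a::comm_ring) v = - sc c v" by (simp add: sc_def fun_eq_iff)

type_synonym ('n, 'p) form = "('n, 'p) vecW \<Rightarrow> ('n, 'p) vecW \<Rightarrow> 'p mod_ring"

definition ip :: "('a::finite \<Rightarrow> real) \<Rightarrow> ('a \<Rightarrow> real) \<Rightarrow> real" where
  "ip f g = (\<Sum>x\<in>UNIV. f x * g x)"

definition cmz :: "('v \<times> 'z::finite \<Rightarrow> real) \<Rightarrow> bool" where
  "cmz f \<longleftrightarrow> (\<forall>v. (\<Sum>s\<in>UNIV. f (v, s)) = 0)"

definition cinv :: "('v \<times> 'z::zero \<Rightarrow> real) \<Rightarrow> bool" where
  "cinv f \<longleftrightarrow> (\<forall>v s. f (v, s) = f (v, 0))"

lemma sum_bij: "bij h \<Longrightarrow> (\<Sum>x\<in>UNIV. F (h x)) = (\<Sum>x\<in>UNIV. (F x :: 'b::comm_monoid_add))"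
  by (rule sum.reindex_bij_betw)

lemma sum_transl: "(\<Sum>t\<in>(UNIV::'a::{ab_group_add,finite} set). F (t + c)) = (\<Sum>t\<in>UNIV. (F t :: 'b::comm_monoid_add))"
  by (rule sum_bij, rule bij_betwI[where g="\<lambda>t. t - c"]) auto

lemma sum_neg: "(\<Sum>t\<in>(UNIV::'a::{ab_group_add,finite} set). F (- t)) = (\<Sum>t\<in>UNIV. (F t :: 'b::comm_monoid_add))"
  by (rule sum_bij, rule bij_betwI[where g="\<lambda>t. - t"]) auto

lemma sum_scale: "(c::'a::{field,finite}) \<noteq> 0 \<Longrightarrow> (\<Sum>t\<in>UNIV. F (c * t)) = (\<Sum>t\<in>UNIV. (F t :: 'b::comm_monoid_add))"
  by (rule sum_bij, rule bij_betwI[where g="\<lambda>t. t / c"]) auto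

lemma ip_sym: "ip f g = ip g f" by (simp add: ip_def mult.commute)

lemma sum_pairs: "(\<Sum>x\<in>(UNIV::('a::finite \<times> 'b::finite) set). F x) = (\<Sum>v\<in>UNIV. \<Sum>s\<in>UNIV. (F (v,s) :: real))"
  by (simp add: sum.cartesian_product UNIV_Times_UNIV[symmetric] del: UNIV_Times_UNIV)

lemma ip_cinv_cmz: "cinv u \<Longrightarrow> cmz w \<Longrightarrow> ip u w = 0"
proof -
  assume u: "cinv u" and w: "cmz w"
  have "ip u w = (\<Sum>v\<in>UNIV. \<Sum>s\<in>UNIV. u (v,s) * w (v,s))" unfolding ip_def by (rule sum_pairs)
  also have "\<dots> = (\<Sum>v\<in>UNIV. u (v,0) * (\<Sum>s\<in>UNIV. w (v,s)))"
  proof -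
    define u0 where "u0 v = u (v,0)" for v
    have ue: "u (v,s) = u0 v" for v s using u unfolding cinv_def u0_def by blast
    show ?thesis by (simp only: ue sum_distrib_left)
  qed
  also have "\<dots> = 0" using w by (simp add: cmz_def)
  finally show ?thesis .
qed

lemma ip_pyth: "cinv u \<Longrightarrow> cmz w \<Longrightarrow> ip (\<lambda>x. u x + w x) (\<lambda>x. u x + w x) = ip u u + ip w w"
proof -
  assume u: "cinv u" and w: "cmz w"
  have pt: "(u x + w x) * (u x + w x) = u x * u x + w x * w x + 2 * (u x * w x)" for x
    by (simp add: algebra_simps)
  have "ip (\<lambda>x. u x + w x) (\<lambda>x. u x + w x) = ip u u + ip w w + 2 * ip u w"
    unfolding ip_def pt by (simp only: sum.distrib sum_distrib_left)
  then show ?thesis using ip_cinv_cmz[OF u w] by simp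
qed

context
  fixes \<omega> :: "('n::finite, 'p::prime_card) form"
  assumes form: "alt_form \<omega>"
begin

lemma om_addl: "\<omega> (u + v) w = \<omega> u w + \<omega> v w" using form by (simp add: alt_form_def)
lemma om_addr: "\<omega> u (v + w) = \<omega> u v + \<omega> u w" using form by (simp add: alt_form_def)
lemma om_scl: "\<omega> (sc c v) w = c * \<omega> v w" using form by (simp add: alt_form_def sc_def)
lemma om_scr: "\<omega> v (sc c w) = c * \<omega> v w" using form by (simp add: alt_form_def sc_def)
lemma om_self[simp]: "\<omega> v v = 0" using form by (simp add: alt_form_def)
lemma om_nondeg: "(\<And>w. \<omega> v w = 0) \<Longrightarrow> v = 0" using form by (simp add: alt_form_def)
lemma om_0l[simp]: "\<omega> 0 w = 0" using om_scl[of 0 0 w] by simp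
lemma om_0r[simp]: "\<omega> w 0 = 0" using om_scr[of w 0 0] by simp
lemma om_negl: "\<omega> (- u) w = - \<omega> u w" using om_scl[of "-1" u w] by (simp add: sc_neg)
lemma om_negr: "\<omega> w (- u) = - \<omega> w u" using om_scr[of w "-1" u] by (simp add: sc_neg)
lemma om_antisym: "\<omega> w v = - \<omega> v w"
proof -
  have "\<omega> (v+w) (v+w) = \<omega> v w + \<omega> w v" unfolding om_addl om_addr by simp
  hence "\<omega> v w + \<omega> w v = 0" by (metis om_self)
  then show ?thesis by (simp add: add_eq_0_iff)
qed
lemma om_scsc[simp]: "\<omega> (sc s v) (sc t v) = 0" by (simp add: om_scl om_scr)

abbreviation mu :: "('n, 'p) heis \<Rightarrow> ('n, 'p) heis \<Rightarrow> ('n, 'p) heis" where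
  "mu x y \<equiv> hmul \<omega> x y"

lemma mu_assoc: "mu (mu x y) z = mu x (mu y z)"
  by (simp add: hmul_def om_addl om_addr algebra_simps)

lemma mu_0l[simp]: "mu (0,0) x = x" by (simp add: hmul_def)
lemma mu_0r[simp]: "mu x (0,0) = x" by (simp add: hmul_def)

definition hinv :: "('n, 'p) heis \<Rightarrow> ('n, 'p) heis" where
  "hinv x = (- fst x, - snd x)"

lemma mu_inv_r[simp]: "mu x (hinv x) = (0,0)" by (simp add: hmul_def hinv_def om_negr)
lemma mu_inv_l[simp]: "mu (hinv x) x = (0,0)" by (simp add: hmul_def hinv_def om_negl)
lemma hinv_hinv[simp]: "hinv (hinv x) = x" by (simp add: hinv_def)

lemma mu_cancel_r: "mu (mu x g) (hinv g) = x" by (simp add: mu_assoc)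
lemma mu_cancel_r2: "mu (mu x (hinv g)) g = x" by (simp add: mu_assoc)

lemma bij_mur: "bij (\<lambda>x. mu x g)"
  by (rule bij_betwI[where g="\<lambda>x. mu x (hinv g)"]) (auto simp: mu_cancel_r mu_cancel_r2)

lemma sum_mur: "(\<Sum>x\<in>UNIV. F (mu x g)) = (\<Sum>x\<in>UNIV. (F x :: real))"
  using sum.reindex_bij_betw[OF bij_mur, of F] by simp

lemma bij_hinv: "bij hinv"
  by (rule bij_betwI[where g="hinv"]) auto

lemma sum_hinv: "(\<Sum>x\<in>UNIV. F (hinv x)) = (\<Sum>x\<in>UNIV. (F x :: real))"
  using sum.reindex_bij_betw[OF bij_hinv, of F] by simp

lemma hinv_mu: "hinv (mu x y) = mu (hinv y) (hinv x)"
  by (simp add: hmul_def hinv_def om_negl om_negr algebra_simps) (simp add: om_antisym[of "fst y"])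

lemma mu_central_r: "mu x (0, s) = (fst x, snd x + s)" by (simp add: hmul_def)
lemma mu_central_l: "mu (0, s) x = (fst x, snd x + s)" by (simp add: hmul_def add.commute)

lemma central_comm: "mu x (mu (0,s) y) = mu (mu x y) (0,s)"
  by (simp add: hmul_def ac_simps)

lemma two_ne0: "odd CARD('p) \<Longrightarrow> (2::'p mod_ring) \<noteq> 0"
proof
  assume o: "odd CARD('p)" and z: "(2::'p mod_ring) = 0"
  have "(of_nat 2 :: 'p mod_ring) = 0" using z by simp
  then have "CARD('p) dvd 2" using of_nat_0_mod_ring_dvd by blast
  then have "CARD('p) \<le> 2" by (rule dvd_imp_le) simp
  moreover have "CARD('p) \<ge> 2" using prime_card[where 'a='p] prime_ge_2_nat by blast
  ultimately have "CARD('p) = 2" by simp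
  then show False using o by simp
qed

lemma commutator:
  assumes "odd CARD('p)"
  shows "mu x y = mu (mu y x) (0, \<omega> (fst x) (fst y))"
proof -
  define c where "c = \<omega> (fst x) (fst y)"
  define i where "i = inverse (2::'p mod_ring)"
  have "i * c + i * c = (i + i) * c" by (rule distrib_right[symmetric])
  also have "i + i = 2 * i" by (rule mult_2[symmetric])
  also have "2 * i = 1" unfolding i_def using two_ne0[OF assms] by (rule right_inverse)
  finally have key: "i * c + i * c = c" by simp
  have "snd y + snd x + i * (-c) + c = snd y + snd x + i * (-c) + (i * c + i * c)"
    by (simp only: key)
  also have "\<dots> = snd x + snd y + i * c" by (simp add: algebra_simps)
  finally have k2: "snd y + snd x + i * (-c) + c = snd x + snd y + i * c" .
  have yx: "\<omega> (fst y) (fst x) = - c" unfolding c_def by (rule om_antisym)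
  have "mu (mu y x) (0,c) = (fst y + fst x, snd y + snd x + i * (-c) + c)"
    using yx by (simp add: hmul_def i_def)
  also have "\<dots> = (fst x + fst y, snd x + snd y + i * c)"
    by (simp only: k2 add.commute[of "fst y"])
  also have "\<dots> = mu x y" by (simp add: hmul_def i_def c_def)
  finally show ?thesis by (simp add: c_def)
qed

definition e :: "('n, 'p) heis \<Rightarrow> 'p mod_ring \<Rightarrow> ('n, 'p) heis" where
  "e a t = (sc t (fst a), t * snd a)"

lemma e_add: "mu (e a s) (e a t) = e a (s + t)"
  by (simp add: e_def hmul_def sc_add_l algebra_simps)
lemma e_0[simp]: "e a 0 = (0,0)" by (simp add: e_def zero_fun_def sc_def)
lemma hinv_e: "hinv (e a t) = e a (- t)" by (simp add: e_def hinv_def sc_neg)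
lemma fst_mu_e: "fst (mu x (e a t)) = fst x + sc t (fst a)" by (simp add: hmul_def e_def)

lemma hpow_e: "hpow \<omega> a k = e a (of_nat k)"
proof (induction k)
  case 0 then show ?case by simp
next
  case (Suc k)
  have e1: "e a 1 = a" by (simp add: e_def)
  have "hpow \<omega> a (Suc k) = mu a (hpow \<omega> a k)" by simp
  also have "\<dots> = mu (e a 1) (e a (of_nat k))" using Suc e1 by simp
  also have "\<dots> = e a (1 + of_nat k)" by (rule e_add)
  finally show ?case by simp
qed

lemma cyc_e: "cyc \<omega> a = range (e a)"
proof -
  have "range (e a) \<subseteq> range (\<lambda>k. e a (of_nat k))"
  proof
    fix y assume "y \<in> range (e a)"
    then obtain t where t: "y = e a t" by blast
    obtain i where "t = of_nat i" using surj_of_nat_mod_ring[where 'a='p] by blast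
    then show "y \<in> range (\<lambda>k. e a (of_nat k))" using t by blast
  qed
  then show ?thesis unfolding cyc_def hpow_e[abs_def] by auto
qed


definition Pu :: "('n, 'p) heis \<Rightarrow> (('n, 'p) heis \<Rightarrow> real) \<Rightarrow> ('n, 'p) heis \<Rightarrow> real" where
  "Pu a f x = (\<Sum>t\<in>UNIV. f (mu x (e a t)))"

definition Dr :: "('n, 'p) heis \<Rightarrow> (('n, 'p) heis \<Rightarrow> real) \<Rightarrow> real" where
  "Dr a f = (\<Sum>x\<in>UNIV. \<Sum>t\<in>UNIV. (f x - f (mu x (e a t)))\<^sup>2)"

lemma mu_e_e: "mu (mu x (e a s)) (e a t) = mu x (e a (s + t))"
  by (simp add: mu_assoc e_add)

lemma Pu_inv: "Pu a f (mu x (e a s)) = Pu a f x"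
proof -
  have "Pu a f (mu x (e a s)) = (\<Sum>t\<in>UNIV. f (mu x (e a (t + s))))"
    unfolding Pu_def mu_e_e by (simp add: add.commute)
  also have "\<dots> = Pu a f x" unfolding Pu_def by (rule sum_transl)
  finally show ?thesis .
qed

lemma Dr_expand: "Dr a f = 2 * (real CARD('p) * ip f f - ip f (Pu a f))"
proof -
  have 1: "(\<Sum>x\<in>UNIV. \<Sum>t\<in>(UNIV::'p mod_ring set). (f x)\<^sup>2) = real CARD('p) * ip f f"
    by (simp add: ip_def sum_distrib_left power2_eq_square)
  have 2: "(\<Sum>x\<in>UNIV. \<Sum>t\<in>UNIV. (f (mu x (e a t)))\<^sup>2) = real CARD('p) * ip f f"
  proof -
    have "(\<Sum>x\<in>UNIV. \<Sum>t\<in>UNIV. (f (mu x (e a t)))\<^sup>2) = (\<Sum>t\<in>(UNIV::'p mod_ring set). \<Sum>x\<in>UNIV. (f (mu x (e a t)))\<^sup>2)"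
      by (rule sum.swap)
    also have "\<dots> = (\<Sum>t\<in>(UNIV::'p mod_ring set). \<Sum>x\<in>UNIV. (f x)\<^sup>2)"
      using sum_mur[of "\<lambda>y. (f y)\<^sup>2"] by simp
    finally show ?thesis by (simp add: ip_def power2_eq_square)
  qed
  have 3: "(\<Sum>x\<in>UNIV. \<Sum>t\<in>UNIV. f x * f (mu x (e a t))) = ip f (Pu a f)"
    by (simp add: ip_def Pu_def sum_distrib_left)
  have "Dr a f = (\<Sum>x\<in>UNIV. \<Sum>t\<in>(UNIV::'p mod_ring set). (f x)\<^sup>2)
      + (\<Sum>x\<in>UNIV. \<Sum>t\<in>UNIV. (f (mu x (e a t)))\<^sup>2)
      - 2 * (\<Sum>x\<in>UNIV. \<Sum>t\<in>UNIV. f x * f (mu x (e a t)))"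
    unfolding Dr_def power2_diff by (simp add: sum.distrib sum_subtractf sum_distrib_left mult.assoc)
  then show ?thesis using 1 2 3 by simp
qed

lemma Pu_sq: "ip (Pu a f) (Pu a f) = real CARD('p) * ip f (Pu a f)"
proof -
  have step: "(\<Sum>x\<in>UNIV. f (mu x (e a t)) * f (mu x (e a t'))) = (\<Sum>x\<in>UNIV. f x * f (mu x (e a (t' - t))))" for t t'
  proof -
    have "(\<Sum>x\<in>UNIV. f (mu x (e a t)) * f (mu x (e a t')))
        = (\<Sum>x\<in>UNIV. f (mu (mu x (e a (-t))) (e a t)) * f (mu (mu x (e a (-t))) (e a t')))"
      by (rule sum_mur[symmetric])
    also have "\<dots> = (\<Sum>x\<in>UNIV. f x * f (mu x (e a (t' - t))))"
      unfolding mu_e_e by simp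
    finally show ?thesis .
  qed
  have step2: "(\<Sum>x\<in>UNIV. f (mu x (e a t')) * f (mu x (e a t))) = (\<Sum>x\<in>UNIV. f x * f (mu x (e a (t' - t))))" for t t'
    using step[of t t'] by (simp add: mult.commute)
  have "ip (Pu a f) (Pu a f) = (\<Sum>x\<in>UNIV. \<Sum>t\<in>UNIV. \<Sum>t'\<in>UNIV. f (mu x (e a t)) * f (mu x (e a t')))"
    by (simp add: ip_def Pu_def sum_product)
  also have "\<dots> = (\<Sum>t\<in>UNIV. \<Sum>t'\<in>UNIV. \<Sum>x\<in>UNIV. f (mu x (e a t)) * f (mu x (e a t')))"
    by (rule trans[OF sum.swap], rule sum.cong[OF refl], rule sum.swap)
  also have "\<dots> = (\<Sum>t\<in>(UNIV::'p mod_ring set). \<Sum>t'\<in>UNIV. \<Sum>x\<in>UNIV. f x * f (mu x (e a (t' + (- t)))))"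
    by (simp only: step diff_conv_add_uminus)
  also have "\<dots> = (\<Sum>t\<in>(UNIV::'p mod_ring set). \<Sum>d\<in>UNIV. \<Sum>x\<in>UNIV. f x * f (mu x (e a d)))"
    by (rule sum.cong[OF refl], rule sum_transl[where F="\<lambda>d. \<Sum>x\<in>UNIV. f x * f (mu x (e a d))"])
  also have "\<dots> = real CARD('p) * (\<Sum>d\<in>UNIV. \<Sum>x\<in>UNIV. f x * f (mu x (e a d)))"
    by simp
  also have "(\<Sum>d\<in>UNIV. \<Sum>x\<in>UNIV. f x * f (mu x (e a d))) = ip f (Pu a f)"
    unfolding ip_def Pu_def sum_distrib_left by (rule sum.swap)
  finally show ?thesis .
qed

lemma central_swap: "mu g (0,s) = mu (0,s) g" by (simp add: mu_central_l mu_central_r)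

lemma cmz_shift: "cmz (f :: ('n, 'p) heis \<Rightarrow> real) \<Longrightarrow> (\<Sum>s\<in>UNIV. f (w, s + c)) = 0"
  using sum_transl[where F="\<lambda>s. f (w, s)" and c=c] by (simp add: cmz_def)

lemma mu_pair: "mu (v, s) g = (v + fst g, s + (snd g + inverse 2 * \<omega> v (fst g)))"
  by (simp add: hmul_def add.assoc)

lemma cmz_mur: assumes "cmz f" shows "cmz (\<lambda>x. f (mu x g))"
  unfolding cmz_def mu_pair using cmz_shift[OF assms] by simp

lemma cinv_mur: "cinv f \<Longrightarrow> cinv (\<lambda>x. f (mu x g))"
  unfolding cinv_def mu_pair by metis

lemma cmz_Pu: "cmz f \<Longrightarrow> cmz (Pu a f)"
proof -
  assume f: "cmz f"
  have "(\<Sum>s\<in>UNIV. Pu a f (v, s)) = 0" for v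
  proof -
    have "(\<Sum>s\<in>UNIV. Pu a f (v, s)) = (\<Sum>t\<in>UNIV. \<Sum>s\<in>UNIV. f (mu (v, s) (e a t)))"
      unfolding Pu_def by (rule sum.swap)
    also have "\<dots> = 0" using cmz_mur[OF f] by (simp add: cmz_def)
    finally show ?thesis .
  qed
  then show ?thesis by (simp add: cmz_def)
qed

lemma sq_of_s: "(real CARD('p) powr (-1/2))\<^sup>2 = 1 / real CARD('p)"
proof -
  have "real CARD('p) powr (-1/2) = 1 / sqrt (real CARD('p))"
    by (simp add: powr_minus_divide powr_half_sqrt)
  then show ?thesis by (simp add: power_divide)
qed

lemma corr_zero:
  assumes odd: "odd CARD('p)"
    and inv: "\<And>x k. g (mu x (e a k)) = g x"
    and cz: "cmz g"
    and lam: "\<omega> (fst a) (fst b) \<noteq> 0"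
    and d: "d \<noteq> 0"
  shows "(\<Sum>x\<in>UNIV. g x * g (mu x (e b d))) = 0"
proof -
  define S where "S = (\<Sum>x\<in>UNIV. g x * g (mu x (e b d)))"
  define lm where "lm = \<omega> (fst a) (fst b)"
  have key: "g (mu (mu x (e a k)) (e b d)) = g (mu (mu x (e b d)) (0, k * (d * lm)))" for x k
  proof -
    have om: "\<omega> (fst (e a k)) (fst (e b d)) = k * (d * lm)"
      by (simp add: e_def om_scl om_scr lm_def)
    have "mu (mu x (e a k)) (e b d) = mu x (mu (mu (e b d) (e a k)) (0, k * (d * lm)))"
      using commutator[OF odd, of "e a k" "e b d"] om by (simp add: mu_assoc)
    also have "\<dots> = mu (mu (mu x (e b d)) (0, k * (d * lm))) (e a k)"
      by (simp only: mu_assoc central_swap[of "e a k"])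
    finally show ?thesis using inv by simp
  qed
  have Sk: "S = (\<Sum>x\<in>UNIV. g x * g (mu (mu x (e b d)) (0, k * (d * lm))))" for k
  proof -
    have "S = (\<Sum>x\<in>UNIV. g (mu x (e a k)) * g (mu (mu x (e a k)) (e b d)))"
      unfolding S_def by (rule sum_mur[symmetric])
    also have "\<dots> = (\<Sum>x\<in>UNIV. g x * g (mu (mu x (e b d)) (0, k * (d * lm))))"
      by (simp only: key inv)
    finally show ?thesis .
  qed
  have dl: "d * lm \<noteq> 0" using d lam by (simp add: lm_def)
  have inner: "(\<Sum>k\<in>UNIV. g (mu y (0, k * (d * lm)))) = 0" for y
  proof -
    have "(\<Sum>k\<in>UNIV. g (mu y (0, k * (d * lm)))) = (\<Sum>k\<in>UNIV. g (fst y, (d * lm) * k + snd y))"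
      by (simp add: mu_central_r mult.commute add.commute)
    also have "\<dots> = (\<Sum>k\<in>UNIV. g (fst y, k + snd y))"
      by (rule sum_scale[OF dl, where F="\<lambda>k. g (fst y, k + snd y)"])
    also have "\<dots> = 0" by (rule cmz_shift[OF cz])
    finally show ?thesis .
  qed
  have "real CARD('p) * S = (\<Sum>k\<in>(UNIV::'p mod_ring set). S)" by simp
  also have "\<dots> = (\<Sum>k\<in>UNIV. \<Sum>x\<in>UNIV. g x * g (mu (mu x (e b d)) (0, k * (d * lm))))"
    using Sk by (rule sum.cong[OF refl])
  also have "\<dots> = (\<Sum>x\<in>UNIV. g x * (\<Sum>k\<in>UNIV. g (mu (mu x (e b d)) (0, k * (d * lm)))))"
    unfolding sum_distrib_left by (rule sum.swap)
  also have "\<dots> = 0" by (simp add: inner)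
  finally have "real CARD('p) * S = 0" .
  then show ?thesis unfolding S_def[symmetric] by simp
qed

lemma Pu_norm:
  assumes odd: "odd CARD('p)"
    and inv: "\<And>x k. g (mu x (e a k)) = g x"
    and cz: "cmz g"
    and lam: "\<omega> (fst a) (fst b) \<noteq> 0"
  shows "ip (Pu b g) (Pu b g) = real CARD('p) * ip g g"
proof -
  have "ip g (Pu b g) = (\<Sum>d\<in>UNIV. \<Sum>x\<in>UNIV. g x * g (mu x (e b d)))"
    unfolding ip_def Pu_def sum_distrib_left by (rule sum.swap)
  also have "\<dots> = (\<Sum>d\<in>(UNIV::'p mod_ring set). if d = 0 then ip g g else 0)"
  proof (rule sum.cong[OF refl])
    fix d :: "'p mod_ring"
    show "(\<Sum>x\<in>UNIV. g x * g (mu x (e b d))) = (if d = 0 then ip g g else 0)"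
    proof (cases "d = 0")
      case True then show ?thesis by (simp add: ip_def)
    next
      case False then show ?thesis using corr_zero[OF odd inv cz lam False] by simp
    qed
  qed
  also have "\<dots> = ip g g" by simp
  finally show ?thesis using Pu_sq[of b g] by simp
qed

lemma Pu_orth:
  assumes inv: "\<And>x l. h (mu x (e b l)) = h x"
  shows "real CARD('p) * ip g h = ip (Pu b g) h"
proof -
  have l: "ip g h = (\<Sum>x\<in>UNIV. g (mu x (e b l)) * h x)" for l
  proof -
    have "ip g h = (\<Sum>x\<in>UNIV. g (mu x (e b l)) * h (mu x (e b l)))"
      unfolding ip_def by (rule sum_mur[symmetric])
    then show ?thesis by (simp only: inv)
  qed
  have "real CARD('p) * ip g h = (\<Sum>l\<in>(UNIV::'p mod_ring set). ip g h)" by simp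
  also have "\<dots> = (\<Sum>l\<in>UNIV. \<Sum>x\<in>UNIV. g (mu x (e b l)) * h x)"
    using l by (rule sum.cong[OF refl])
  also have "\<dots> = ip (Pu b g) h"
    unfolding ip_def Pu_def sum_distrib_right by (rule sum.swap)
  finally show ?thesis .
qed

lemma pair_arith:
  fixes p F A B C Q s :: real
  assumes p: "p > 0" and s: "s > 0" and s2: "s\<^sup>2 = 1 / p" and A: "A \<ge> 0" and B: "B \<ge> 0"
    and C: "C\<^sup>2 \<le> A * B / p" and Q: "Q\<^sup>2 \<le> F * (A + B + 2 * C)"
    and Y: "A + B = p * Q" and F: "F \<ge> 0"
  shows "A + B \<le> p\<^sup>2 * (1 + s) * F"
proof -
  have ab: "4 * (A * B) \<le> (A + B)\<^sup>2" using sum_squares_ge_zero[of "A - B" 0]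
    by (simp add: power2_eq_square algebra_simps)
  have "(2 * C)\<^sup>2 = 4 * C\<^sup>2" by (simp add: power2_eq_square)
  also have "\<dots> \<le> 4 * (A * B / p)" using C by simp
  also have "\<dots> = (4 * (A * B)) / p" by simp
  also have "\<dots> \<le> (A + B)\<^sup>2 / p" using ab p by (simp add: divide_right_mono)
  also have "\<dots> = (s * (A + B))\<^sup>2" using s2 by (simp add: power_mult_distrib)
  finally have "(2 * C)\<^sup>2 \<le> (s * (A + B))\<^sup>2" .
  then have c2: "2 * C \<le> s * (A + B)"
    by (rule power2_le_imp_le) (use s A B in simp)
  have "Q\<^sup>2 \<le> F * ((1 + s) * (A + B))"
  proof -
    have "A + B + 2 * C \<le> (1 + s) * (A + B)" using c2 by (simp add: algebra_simps)
    then have "F * (A + B + 2 * C) \<le> F * ((1 + s) * (A + B))" using F by (rule mult_left_mono)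
    then show ?thesis using Q by linarith
  qed
  then have "p\<^sup>2 * Q\<^sup>2 \<le> p\<^sup>2 * (F * ((1 + s) * (A + B)))"
    by (rule mult_left_mono) simp
  then have yy: "(A + B) * (A + B) \<le> (p\<^sup>2 * (1 + s) * F) * (A + B)"
    using Y by (simp add: power2_eq_square algebra_simps)
  show ?thesis
  proof (cases "A + B = 0")
    case True then show ?thesis using F s by simp
  next
    case False
    then have "A + B > 0" using A B by simp
    then show ?thesis using yy by (simp add: mult_le_cancel_right)
  qed
qed

lemma ip_CS: "(ip f g)\<^sup>2 \<le> ip f f * ip g g"
  using Cauchy_Schwarz_ineq_sum[of f g UNIV] by (simp add: ip_def power2_eq_square)

lemma ip_nonneg: "ip f f \<ge> 0"
  unfolding ip_def by (rule sum_nonneg) simp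

lemma ip_add_r: "ip f (\<lambda>x. g x + h x) = ip f g + ip f h"
  by (simp add: ip_def distrib_left sum.distrib)

lemma ip_sq_add: "ip (\<lambda>x. g x + h x) (\<lambda>x. g x + h x) = ip g g + ip h h + 2 * ip g h"
proof -
  have pt: "(g x + h x) * (g x + h x) = g x * g x + h x * h x + 2 * (g x * h x)" for x
    by (simp add: algebra_simps)
  show ?thesis unfolding ip_def pt by (simp only: sum.distrib sum_distrib_left)
qed

lemma pair_bound:
  assumes odd: "odd CARD('p)" and cz: "cmz f" and lam: "\<omega> (fst a) (fst b) \<noteq> 0"
  shows "2 * real CARD('p) * (1 - real CARD('p) powr (-1/2)) * ip f f \<le> Dr a f + Dr b f"
proof -
  define pr where "pr = real CARD('p)"
  define s where "s = real CARD('p) powr (-1/2)"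
  define G where "G = Pu a f"
  define H where "H = Pu b f"
  have pr: "pr > 0" unfolding pr_def by simp
  have s0: "s > 0" unfolding s_def by simp
  have s2: "s\<^sup>2 = 1 / pr" unfolding s_def pr_def by (rule sq_of_s)
  have hA: "ip G G = pr * ip f G" unfolding G_def pr_def by (rule Pu_sq)
  have hB: "ip H H = pr * ip f H" unfolding H_def pr_def by (rule Pu_sq)
  have Ginv: "G (mu x (e a k)) = G x" for x k unfolding G_def by (rule Pu_inv)
  have Hinv: "H (mu x (e b k)) = H x" for x k unfolding H_def by (rule Pu_inv)
  have Gcmz: "cmz G" unfolding G_def using cz by (rule cmz_Pu)
  have norm: "ip (Pu b G) (Pu b G) = pr * ip G G"
    unfolding pr_def by (rule Pu_norm[OF odd Ginv Gcmz lam])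
  have orth: "pr * ip G H = ip (Pu b G) H" unfolding pr_def by (rule Pu_orth[OF Hinv])
  have "(pr * ip G H)\<^sup>2 \<le> ip (Pu b G) (Pu b G) * ip H H" unfolding orth by (rule ip_CS)
  then have "pr\<^sup>2 * (ip G H)\<^sup>2 \<le> pr * (ip G G * ip H H)" using norm by (simp add: power_mult_distrib)
  then have "pr * (ip G H)\<^sup>2 \<le> ip G G * ip H H" using pr by (simp add: power2_eq_square)
  then have C: "(ip G H)\<^sup>2 \<le> ip G G * ip H H / pr" using pr by (simp add: field_simps)
  have Q: "(ip f (\<lambda>x. G x + H x))\<^sup>2 \<le> ip f f * (ip G G + ip H H + 2 * ip G H)"
    using ip_CS[of f "\<lambda>x. G x + H x"] by (simp only: ip_sq_add)
  have Y: "ip G G + ip H H = pr * ip f (\<lambda>x. G x + H x)"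
    unfolding ip_add_r hA hB by (simp add: algebra_simps)
  have bound: "ip G G + ip H H \<le> pr\<^sup>2 * (1 + s) * ip f f"
    by (rule pair_arith[OF pr s0 s2 ip_nonneg ip_nonneg C Q Y ip_nonneg])
  have "Dr a f + Dr b f = 4 * pr * ip f f - 2 * (ip f G + ip f H)"
    unfolding Dr_expand G_def H_def pr_def by simp
  also have "ip f G + ip f H = (ip G G + ip H H) / pr" using hA hB pr by (simp add: field_simps)
  finally have "Dr a f + Dr b f = 4 * pr * ip f f - 2 * ((ip G G + ip H H) / pr)" .
  moreover have "(ip G G + ip H H) / pr \<le> pr * (1 + s) * ip f f"
    using bound pr by (simp add: field_simps power2_eq_square)
  ultimately have "Dr a f + Dr b f \<ge> 4 * pr * ip f f - 2 * (pr * (1 + s) * ip f f)" by linarith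
  then have "2 * pr * (1 - s) * ip f f \<le> Dr a f + Dr b f" by (simp add: algebra_simps)
  then show ?thesis by (simp add: pr_def s_def)
qed

lemma subspW_sc: "subspW L \<longleftrightarrow> 0 \<in> L \<and> (\<forall>u\<in>L. \<forall>v\<in>L. u + v \<in> L) \<and> (\<forall>c. \<forall>v\<in>L. sc c v \<in> L)"
  by (simp add: subspW_def sc_def)

definition dot :: "('n, 'p) vecW \<Rightarrow> ('n, 'p) vecW \<Rightarrow> 'p mod_ring" where
  "dot c w = (\<Sum>i\<in>UNIV. c i * w i)"

lemma dot_add: "dot c (u + v) = dot c u + dot c v"
  by (simp add: dot_def distrib_left sum.distrib)
lemma dot_sc: "dot c (sc k v) = k * dot c v"
  by (simp add: dot_def sc_def sum_distrib_left algebra_simps)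
lemma dot_0[simp]: "dot c 0 = 0" by (simp add: dot_def)
lemma dot_0l[simp]: "dot 0 w = 0" by (simp add: dot_def)
lemma dot_delta: "dot c (\<lambda>j. if j = i then 1 else 0) = c i"
  by (simp add: dot_def if_distrib cong: if_cong)
lemma dot_diff: "dot c (u - v) = dot c u - dot c v"
  by (simp add: dot_def right_diff_distrib sum_subtractf)

lemma hyper_ker:
  assumes c: "c \<noteq> 0"
  shows "hyperplaneW {w. dot c w = 0}"
proof -
  let ?L = "{w. dot c w = 0}"
  have sub: "subspW ?L" unfolding subspW_sc by (simp add: dot_add dot_sc)
  obtain i where ci: "c i \<noteq> 0" using c by (auto simp: fun_eq_iff)
  have nU: "?L \<noteq> UNIV"
  proof
    assume "?L = UNIV"
    then have "dot c (\<lambda>j. if j = i then 1 else 0) = 0" by blast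
    then show False using ci by (simp add: dot_delta)
  qed
  have maxl: "M = ?L \<or> M = UNIV" if M: "subspW M" "?L \<subseteq> M" for M
  proof (cases "M = ?L")
    case True then show ?thesis by simp
  next
    case False
    then obtain m where m: "m \<in> M" "dot c m \<noteq> 0" using M(2) by blast
    have "x \<in> M" for x
    proof -
      define al where "al = dot c x / dot c m"
      have "dot c (x + sc (- al) m) = 0" using m(2) by (simp add: dot_add dot_sc al_def)
      then have y: "x + sc (- al) m \<in> M" using M(2) by blast
      have z: "sc al m \<in> M" using M(1) m(1) unfolding subspW_sc by blast
      have "x = (x + sc (- al) m) + sc al m" by (simp add: sc_neg)
      then show ?thesis using M(1) y z unfolding subspW_sc by metis
    qed
    then show ?thesis by blast
  qed
  show ?thesis unfolding hyperplaneW_def using sub nU maxl by blast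
qed

lemma subsp_perp: "subspW {x. \<omega> y x = 0}"
  unfolding subspW_sc by (simp add: om_addr om_scr)
lemma subsp_perp2: "subspW {y. \<omega> y x = 0}"
  unfolding subspW_sc by (simp add: om_addl om_scl)

lemma iso_hyper:
  assumes iso: "\<And>x y. x \<in> A \<Longrightarrow> y \<in> A \<Longrightarrow> \<omega> x y = 0"
  shows "\<exists>L. hyperplaneW L \<and> A \<subseteq> L"
proof -
  define S where "S = \<Inter>{M. subspW M \<and> A \<subseteq> M}"
  have memS: "x \<in> S \<longleftrightarrow> (\<forall>M. subspW M \<longrightarrow> A \<subseteq> M \<longrightarrow> x \<in> M)" for x
    unfolding S_def by blast
  have subS: "subspW S" unfolding subspW_sc
  proof (intro conjI ballI allI)
    show "0 \<in> S" unfolding memS subspW_sc by simp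
    show "u + v \<in> S" if "u \<in> S" "v \<in> S" for u v
      using that unfolding memS subspW_sc by simp
    show "sc c v \<in> S" if "v \<in> S" for c v
      using that unfolding memS subspW_sc by simp
  qed
  have AS: "A \<subseteq> S" using memS by blast
  have iso1: "\<omega> y x = 0" if "y \<in> A" "x \<in> S" for x y
  proof -
    have "subspW {x. \<omega> y x = 0}" by (rule subsp_perp)
    moreover have "A \<subseteq> {x. \<omega> y x = 0}" using iso that(1) by blast
    ultimately show ?thesis using that(2) unfolding memS by blast
  qed
  have iso2: "\<omega> y x = 0" if "y \<in> S" "x \<in> S" for x y
  proof -
    have "subspW {y. \<omega> y x = 0}" by (rule subsp_perp2)
    moreover have "A \<subseteq> {y. \<omega> y x = 0}" using iso1 that(2) by blast
    ultimately show ?thesis using that(1) unfolding memS by blast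
  qed
  have SnU: "S \<noteq> UNIV"
  proof
    assume SU: "S = UNIV"
    have "\<omega> (\<lambda>_. 1) w = 0" for w using iso2 SU by simp
    then have "(\<lambda>_::'n. 1 :: 'p mod_ring) = 0" by (rule om_nondeg)
    then show False by (simp add: fun_eq_iff)
  qed
  define MM where "MM = {M. subspW M \<and> S \<subseteq> M \<and> M \<noteq> UNIV}"
  have "finite MM" by simp
  moreover have "MM \<noteq> {}" using subS SnU unfolding MM_def by blast
  ultimately obtain M where M: "M \<in> MM" and mx: "\<forall>b\<in>MM. M \<le> b \<longrightarrow> M = b"
    using finite_has_maximal by blast
  have "hyperplaneW M" unfolding hyperplaneW_def
  proof (intro conjI allI impI)
    show "subspW M" "M \<noteq> UNIV" using M unfolding MM_def by auto
    fix M' assume "subspW M' \<and> M \<subseteq> M'"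
    then show "M' = M \<or> M' = UNIV" using mx M unfolding MM_def by blast
  qed
  moreover have "A \<subseteq> M" using AS M unfolding MM_def by blast
  ultimately show ?thesis by blast
qed

lemma Dr_nonneg: "Dr a f \<ge> 0"
  unfolding Dr_def by (intro sum_nonneg) simp

lemma s_le1: "real CARD('p) powr (-1/2) \<le> 1"
proof -
  have e: "real CARD('p) powr (-1/2) = 1 / sqrt (real CARD('p))"
    by (simp add: powr_minus_divide powr_half_sqrt)
  have "sqrt (real CARD('p)) \<ge> 1" by simp
  then show ?thesis unfolding e by simp
qed

lemma nonab_bound:
  assumes odd: "odd CARD('p)" and cz: "cmz f"
    and hyp: "\<And>L. hyperplaneW L \<Longrightarrow> real (card {j\<in>{..<N}. fst (a j) \<in> L}) / real N \<le> \<beta>"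
    and N: "N \<ge> 1"
  shows "real N * (1 - \<beta>) * (real CARD('p) * (1 - real CARD('p) powr (-1/2)) * ip f f) \<le> (\<Sum>j<N. Dr (a j) f)"
proof -
  define T where "T = real CARD('p) * (1 - real CARD('p) powr (-1/2)) * ip f f"
  have T0: "T \<ge> 0" unfolding T_def by (intro mult_nonneg_nonneg) (use s_le1 ip_nonneg in auto)
  define J where "J = {j\<in>{..<N}. Dr (a j) f < T}"
  have orth: "\<omega> (fst (a i)) (fst (a j)) = 0" if "i \<in> J" "j \<in> J" for i j
  proof (rule ccontr)
    assume ne: "\<omega> (fst (a i)) (fst (a j)) \<noteq> 0"
    have "2 * T \<le> Dr (a i) f + Dr (a j) f" unfolding T_def using pair_bound[OF odd cz ne] by simp
    moreover have "Dr (a i) f + Dr (a j) f < 2 * T" using that unfolding J_def by simp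
    ultimately show False by simp
  qed
  obtain L where L: "hyperplaneW L" "(\<lambda>j. fst (a j)) ` J \<subseteq> L"
    using iso_hyper[of "(\<lambda>j. fst (a j)) ` J"] orth by blast
  have "J \<subseteq> {j\<in>{..<N}. fst (a j) \<in> L}" using L(2) unfolding J_def by blast
  then have "card J \<le> card {j\<in>{..<N}. fst (a j) \<in> L}" by (intro card_mono) auto
  then have "real (card J) / real N \<le> \<beta>" using hyp[OF L(1)] N
    by (smt (verit) divide_right_mono of_nat_0_le_iff of_nat_le_iff)
  then have cJ: "real (card J) \<le> \<beta> * real N" using N by (simp add: field_simps)
  have JN: "J \<subseteq> {..<N}" unfolding J_def by blast
  have "(\<Sum>j\<in>{..<N} - J. Dr (a j) f) \<le> (\<Sum>j<N. Dr (a j) f)"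
    by (rule sum_mono2) (auto simp: Dr_nonneg)
  moreover have "real (card ({..<N} - J)) * T \<le> (\<Sum>j\<in>{..<N} - J. Dr (a j) f)"
    by (rule sum_bounded_below) (auto simp: J_def)
  moreover have "card ({..<N} - J) = N - card J" using JN by (simp add: card_Diff_subset finite_subset)
  moreover have "card J \<le> N" using JN card_mono[of "{..<N}" J] by simp
  ultimately have "(real N - real (card J)) * T \<le> (\<Sum>j<N. Dr (a j) f)" by (simp add: of_nat_diff)
  moreover have "real N * (1 - \<beta>) * T \<le> (real N - real (card J)) * T"
    using cJ T0 by (intro mult_right_mono) (auto simp: algebra_simps)
  ultimately show ?thesis unfolding T_def by linarith
qed

lemma dot_comm: "dot c w = dot w c" by (simp add: dot_def mult.commute)

lemma card_fibre:
  assumes d: "d \<noteq> 0"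
  shows "card {c. dot c d = s} = card {c. dot c d = 0}"
proof -
  obtain i where di: "d i \<noteq> 0" using d by (auto simp: fun_eq_iff)
  define del where "del = (\<lambda>j. if j = i then 1 else (0::'p mod_ring))"
  define al where "al = s / d i"
  have dd: "dot d del = d i" unfolding del_def by (rule dot_delta)
  have "bij_betw (\<lambda>c. c + sc al del) {c. dot c d = 0} {c. dot c d = s}"
  proof (rule bij_betwI[where g="\<lambda>c. c - sc al del"])
    show "(\<lambda>c. c + sc al del) \<in> {c. dot c d = 0} \<rightarrow> {c. dot c d = s}"
      using di by (auto simp: dot_comm[of _ d] dot_add dot_sc dd al_def)
    show "(\<lambda>c. c - sc al del) \<in> {c. dot c d = s} \<rightarrow> {c. dot c d = 0}"
      using di by (auto simp: dot_comm[of _ d] dot_diff dot_sc dd al_def)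
  qed auto
  then show ?thesis by (simp add: bij_betw_same_card)
qed

lemma card_ker:
  assumes d: "d \<noteq> 0"
  shows "real (card {c. dot c d = 0}) * real CARD('p) = real CARD(('n, 'p) vecW)"
proof -
  have "CARD(('n, 'p) vecW) = (\<Sum>s\<in>(UNIV::'p mod_ring set). card {c. dot c d = s})"
    using sum.group[of UNIV UNIV "\<lambda>c. dot c d" "\<lambda>_. (1::nat)"] by simp
  also have "\<dots> = (\<Sum>s\<in>(UNIV::'p mod_ring set). card {c. dot c d = 0})"
    by (rule sum.cong[OF refl]) (rule card_fibre[OF d])
  also have "\<dots> = CARD('p) * card {c. dot c d = 0}" by simp
  finally show ?thesis by (metis mult.commute of_nat_mult)
qed

definition Sc :: "('n, 'p) vecW \<Rightarrow> (('n, 'p) vecW \<Rightarrow> real) \<Rightarrow> 'p mod_ring \<Rightarrow> real" where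
  "Sc c u s = (\<Sum>y\<in>{y. dot c y = s}. u y)"

lemma Sc_total: "(\<Sum>s\<in>UNIV. Sc c u s) = (\<Sum>y\<in>UNIV. u y)"
  unfolding Sc_def using sum.group[of UNIV UNIV "dot c" u] by simp

lemma Q_nonneg: "(\<Sum>w\<in>UNIV. u w * Sc c u (dot c w)) \<ge> 0"
proof -
  have "(\<Sum>w\<in>UNIV. u w * Sc c u (dot c w)) = (\<Sum>s\<in>UNIV. \<Sum>w\<in>{w\<in>UNIV. dot c w = s}. u w * Sc c u (dot c w))"
    using sum.group[of UNIV UNIV "dot c" "\<lambda>w. u w * Sc c u (dot c w)"] by simp
  also have "\<dots> = (\<Sum>s\<in>UNIV. \<Sum>w\<in>{w. dot c w = s}. u w * Sc c u s)"
    by (rule sum.cong[OF refl], rule sum.cong) auto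
  also have "\<dots> = (\<Sum>s\<in>UNIV. Sc c u s * Sc c u s)"
    unfolding Sc_def by (simp add: sum_distrib_right)
  also have "\<dots> \<ge> 0" by (rule sum_nonneg) simp
  finally show ?thesis .
qed

lemma G_total:
  assumes u0: "(\<Sum>y\<in>UNIV. u y) = 0"
  shows "(\<Sum>c\<in>UNIV. Sc c u (dot c w)) = (real CARD(('n, 'p) vecW) - real CARD(('n, 'p) vecW) / real CARD('p)) * u w"
proof -
  define K where "K = real CARD(('n, 'p) vecW) / real CARD('p)"
  have cnt: "real (card {c. dot c y = dot c w}) = K + (if y = w then real CARD(('n, 'p) vecW) - K else 0)" for y
  proof (cases "y = w")
    case True then show ?thesis by simp
  next
    case False
    then have "y - w \<noteq> 0" by simp
    moreover have "{c. dot c y = dot c w} = {c. dot c (y - w) = 0}" by (simp add: dot_diff)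
    ultimately show ?thesis using card_ker[of "y - w"] False unfolding K_def by (simp add: field_simps)
  qed
  have "(\<Sum>c\<in>UNIV. Sc c u (dot c w)) = (\<Sum>c\<in>UNIV. \<Sum>y\<in>UNIV. if dot c y = dot c w then u y else 0)"
    unfolding Sc_def by (simp add: sum.inter_filter[symmetric])
  also have "\<dots> = (\<Sum>y\<in>UNIV. \<Sum>c\<in>UNIV. if dot c y = dot c w then u y else 0)"
    by (rule sum.swap)
  also have "\<dots> = (\<Sum>y\<in>UNIV. u y * real (card {c. dot c y = dot c w}))"
    by (simp add: sum.If_cases mult.commute)
  also have "\<dots> = (\<Sum>y\<in>UNIV. K * u y + (if y = w then (real CARD(('n, 'p) vecW) - K) * u y else 0))"
    unfolding cnt by (rule sum.cong) (auto simp: algebra_simps)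
  also have "\<dots> = K * (\<Sum>y\<in>UNIV. u y) + (real CARD(('n, 'p) vecW) - K) * u w"
    by (simp add: sum.distrib sum_distrib_left)
  finally show ?thesis using u0 unfolding K_def by simp
qed

lemma A_G:
  assumes u0: "(\<Sum>y\<in>UNIV. u y) = 0"
  shows "(\<Sum>t\<in>UNIV. Sc c u (dot c (w + sc t v))) = (if dot c v = 0 then real CARD('p) * Sc c u (dot c w) else 0)"
proof (cases "dot c v = 0")
  case True then show ?thesis by (simp add: dot_add dot_sc)
next
  case False
  have "(\<Sum>t\<in>UNIV. Sc c u (dot c (w + sc t v))) = (\<Sum>t\<in>UNIV. Sc c u (dot c v * t + dot c w))"
    by (simp add: dot_add dot_sc mult.commute add.commute)
  also have "\<dots> = (\<Sum>t\<in>UNIV. Sc c u (t + dot c w))"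
    by (rule sum_scale[OF False, where F="\<lambda>t. Sc c u (t + dot c w)"])
  also have "\<dots> = (\<Sum>t\<in>UNIV. Sc c u t)" by (rule sum_transl)
  also have "\<dots> = 0" using u0 by (simp add: Sc_total)
  finally show ?thesis using False by simp
qed

lemma abel_key:
  fixes u :: "('n, 'p) vecW \<Rightarrow> real"
  assumes u0: "(\<Sum>y\<in>UNIV. u y) = 0"
    and hyp: "\<And>L. hyperplaneW L \<Longrightarrow> real (card {j\<in>{..<N}. fst (a j) \<in> L}) / real N \<le> \<beta>"
    and N: "N \<ge> 1"
  shows "(\<Sum>j<N. \<Sum>w\<in>UNIV. u w * (\<Sum>t\<in>UNIV. u (w + sc t (fst (a j)))))
     \<le> real CARD('p) * real N * \<beta> * (\<Sum>w\<in>UNIV. u w * u w)"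
proof -
  define pr where "pr = real CARD('p)"
  define M where "M = real CARD(('n, 'p) vecW) - real CARD(('n, 'p) vecW) / real CARD('p)"
  have Mpos: "M > 0"
  proof -
    have "real CARD('p) > 1" using prime_card[where 'a='p] prime_gt_1_nat by simp
    moreover have "real CARD(('n, 'p) vecW) > 0" by simp
    ultimately have "real CARD(('n, 'p) vecW) / real CARD('p) < real CARD(('n, 'p) vecW)"
      by (simp add: divide_less_eq)
    then show ?thesis unfolding M_def by simp
  qed
  define Q where "Q c = (\<Sum>w\<in>UNIV. u w * Sc c u (dot c w))" for c
  have Qnn: "Q c \<ge> 0" for c unfolding Q_def by (rule Q_nonneg)
  have Q0: "Q 0 = 0" unfolding Q_def Sc_def using u0 by simp
  have GT: "(\<Sum>c\<in>UNIV. Sc c u (dot c y)) = M * u y" for y unfolding M_def by (rule G_total[OF u0])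
  have per_j: "M * (\<Sum>w\<in>UNIV. u w * (\<Sum>t\<in>UNIV. u (w + sc t v)))
      = (\<Sum>c\<in>UNIV. if dot c v = 0 then pr * Q c else 0)" for v
  proof -
    have "M * (\<Sum>w\<in>UNIV. u w * (\<Sum>t\<in>UNIV. u (w + sc t v)))
        = (\<Sum>w\<in>UNIV. u w * (\<Sum>t\<in>UNIV. M * u (w + sc t v)))"
      by (simp add: sum_distrib_left algebra_simps)
    also have "\<dots> = (\<Sum>w\<in>UNIV. u w * (\<Sum>t\<in>UNIV. \<Sum>c\<in>UNIV. Sc c u (dot c (w + sc t v))))"
      by (simp only: GT)
    also have "\<dots> = (\<Sum>w\<in>UNIV. u w * (\<Sum>c\<in>UNIV. \<Sum>t\<in>UNIV. Sc c u (dot c (w + sc t v))))"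
      by (simp only: sum.swap[of _ "UNIV::'p mod_ring set"])
    also have "\<dots> = (\<Sum>w\<in>UNIV. u w * (\<Sum>c\<in>UNIV. if dot c v = 0 then pr * Sc c u (dot c w) else 0))"
      unfolding pr_def by (simp only: A_G[OF u0])
    also have "\<dots> = (\<Sum>c\<in>UNIV. \<Sum>w\<in>UNIV. u w * (if dot c v = 0 then pr * Sc c u (dot c w) else 0))"
      unfolding sum_distrib_left by (rule sum.swap)
    also have "\<dots> = (\<Sum>c\<in>UNIV. if dot c v = 0 then pr * Q c else 0)"
      unfolding Q_def by (rule sum.cong[OF refl]) (simp add: sum_distrib_left algebra_simps)
    finally show ?thesis .
  qed
  define cnt where "cnt c = real (card {j\<in>{..<N}. dot c (fst (a j)) = 0})" for c
  have cnt_le: "cnt c \<le> \<beta> * real N" if "c \<noteq> 0" for c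
  proof -
    have "real (card {j\<in>{..<N}. fst (a j) \<in> {w. dot c w = 0}}) / real N \<le> \<beta>"
      by (rule hyp[OF hyper_ker[OF that]])
    then show ?thesis using N unfolding cnt_def by (simp add: field_simps)
  qed
  have "M * (\<Sum>j<N. \<Sum>w\<in>UNIV. u w * (\<Sum>t\<in>UNIV. u (w + sc t (fst (a j)))))
      = (\<Sum>j<N. \<Sum>c\<in>UNIV. if dot c (fst (a j)) = 0 then pr * Q c else 0)"
    by (subst sum_distrib_left) (simp only: per_j)
  also have "\<dots> = (\<Sum>c\<in>UNIV. \<Sum>j<N. if dot c (fst (a j)) = 0 then pr * Q c else 0)"
    by (rule sum.swap)
  also have "\<dots> = (\<Sum>c\<in>UNIV. pr * Q c * cnt c)"
    by (rule sum.cong[OF refl]) (simp add: sum.If_cases cnt_def Int_def conj_commute)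
  also have "\<dots> \<le> (\<Sum>c\<in>UNIV. pr * Q c * (\<beta> * real N))"
  proof (rule sum_mono)
    fix c :: "('n, 'p) vecW"
    show "pr * Q c * cnt c \<le> pr * Q c * (\<beta> * real N)"
    proof (cases "c = 0")
      case True then show ?thesis by (simp add: Q0)
    next
      case False
      have "pr * Q c \<ge> 0" using Qnn unfolding pr_def by simp
      then show ?thesis by (rule mult_left_mono[OF cnt_le[OF False]])
    qed
  qed
  also have "\<dots> = pr * \<beta> * real N * (\<Sum>c\<in>UNIV. Q c)"
    by (simp add: sum_distrib_left algebra_simps)
  also have "(\<Sum>c\<in>UNIV. Q c) = M * (\<Sum>w\<in>UNIV. u w * u w)"
  proof -
    have "(\<Sum>c\<in>UNIV. Q c) = (\<Sum>w\<in>UNIV. u w * (\<Sum>c\<in>UNIV. Sc c u (dot c w)))"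
      unfolding Q_def sum_distrib_left by (rule sum.swap)
    also have "\<dots> = M * (\<Sum>w\<in>UNIV. u w * u w)"
      by (simp add: GT sum_distrib_left algebra_simps)
    finally show ?thesis .
  qed
  finally have "M * (\<Sum>j<N. \<Sum>w\<in>UNIV. u w * (\<Sum>t\<in>UNIV. u (w + sc t (fst (a j)))))
      \<le> M * (pr * real N * \<beta> * (\<Sum>w\<in>UNIV. u w * u w))" by (simp only: mult_ac)
  then show ?thesis using Mpos unfolding pr_def by (simp add: mult_le_cancel_left)
qed

lemma W_expand:
  fixes u :: "('n, 'p) vecW \<Rightarrow> real" and v :: "('n, 'p) vecW"
  shows "(\<Sum>w\<in>UNIV. \<Sum>t\<in>UNIV. (u w - u (w + sc t v))\<^sup>2)
    = 2 * real CARD('p) * (\<Sum>w\<in>UNIV. u w * u w) - 2 * (\<Sum>w\<in>UNIV. u w * (\<Sum>t\<in>UNIV. u (w + sc t v)))"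
proof -
  have 1: "(\<Sum>w\<in>UNIV. \<Sum>t\<in>(UNIV::'p mod_ring set). (u w)\<^sup>2) = real CARD('p) * (\<Sum>w\<in>UNIV. u w * u w)"
    by (simp add: sum_distrib_left power2_eq_square)
  have 2: "(\<Sum>w\<in>UNIV. \<Sum>t\<in>(UNIV::'p mod_ring set). (u (w + sc t v))\<^sup>2) = real CARD('p) * (\<Sum>w\<in>UNIV. u w * u w)"
  proof -
    have "(\<Sum>w\<in>UNIV. \<Sum>t\<in>(UNIV::'p mod_ring set). (u (w + sc t v))\<^sup>2) = (\<Sum>t\<in>(UNIV::'p mod_ring set). \<Sum>w\<in>UNIV. (u (w + sc t v))\<^sup>2)"
      by (rule sum.swap)
    also have "\<dots> = (\<Sum>t\<in>(UNIV::'p mod_ring set). \<Sum>w\<in>UNIV. (u w)\<^sup>2)"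
      by (rule sum.cong[OF refl], rule sum_transl[where F="\<lambda>w. (u w)\<^sup>2"])
    finally show ?thesis by (simp add: power2_eq_square)
  qed
  have 3: "(\<Sum>w\<in>UNIV. \<Sum>t\<in>(UNIV::'p mod_ring set). u w * u (w + sc t v)) = (\<Sum>w\<in>UNIV. u w * (\<Sum>t\<in>UNIV. u (w + sc t v)))"
    by (simp add: sum_distrib_left)
  have "(\<Sum>w\<in>UNIV. \<Sum>t\<in>UNIV. (u w - u (w + sc t v))\<^sup>2)
      = (\<Sum>w\<in>UNIV. \<Sum>t\<in>(UNIV::'p mod_ring set). (u w)\<^sup>2)
      + (\<Sum>w\<in>UNIV. \<Sum>t\<in>(UNIV::'p mod_ring set). (u (w + sc t v))\<^sup>2)
      - 2 * (\<Sum>w\<in>UNIV. \<Sum>t\<in>(UNIV::'p mod_ring set). u w * u (w + sc t v))"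
    unfolding power2_diff by (simp add: sum.distrib sum_subtractf sum_distrib_left mult.assoc)
  then show ?thesis using 1 2 3 by simp
qed

lemma abel_bound:
  assumes ci: "cinv h" and h0: "(\<Sum>x\<in>UNIV. h x) = 0"
    and hyp: "\<And>L. hyperplaneW L \<Longrightarrow> real (card {j\<in>{..<N}. fst (a j) \<in> L}) / real N \<le> \<beta>"
    and N: "N \<ge> 1"
  shows "real N * (1 - \<beta>) * (2 * real CARD('p) * ip h h) \<le> (\<Sum>j<N. Dr (a j) h)"
proof -
  define pr where "pr = real CARD('p)"
  define u where "u w = h (w, 0)" for w
  have hu: "h x = u (fst x)" for x using ci unfolding cinv_def u_def by (cases x) simp
  have pr0: "pr > 0" unfolding pr_def by simp
  have "(\<Sum>x\<in>UNIV. h x) = pr * (\<Sum>w\<in>UNIV. u w)"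
    unfolding sum_pairs hu pr_def by (simp add: sum_distrib_left)
  then have u0: "(\<Sum>w\<in>UNIV. u w) = 0" using h0 pr0 by simp
  have iph: "ip h h = pr * (\<Sum>w\<in>UNIV. u w * u w)"
    unfolding ip_def sum_pairs hu pr_def by (simp add: sum_distrib_left)
  have Drj: "Dr b h = pr * (2 * pr * (\<Sum>w\<in>UNIV. u w * u w) - 2 * (\<Sum>w\<in>UNIV. u w * (\<Sum>t\<in>UNIV. u (w + sc t (fst b)))))" for b
  proof -
    have "Dr b h = (\<Sum>x\<in>(UNIV::('n, 'p) heis set). \<Sum>t\<in>UNIV. (u (fst x) - u (fst x + sc t (fst b)))\<^sup>2)"
      unfolding Dr_def hu fst_mu_e by simp
    also have "\<dots> = pr * (\<Sum>w\<in>UNIV. \<Sum>t\<in>UNIV. (u w - u (w + sc t (fst b)))\<^sup>2)"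
      unfolding sum_pairs pr_def by (simp add: sum_distrib_left)
    finally show ?thesis unfolding W_expand pr_def .
  qed
  have key: "(\<Sum>j<N. \<Sum>w\<in>UNIV. u w * (\<Sum>t\<in>UNIV. u (w + sc t (fst (a j)))))
     \<le> pr * real N * \<beta> * (\<Sum>w\<in>UNIV. u w * u w)" unfolding pr_def by (rule abel_key[OF u0 hyp N])
  have "(\<Sum>j<N. Dr (a j) h) = pr * (2 * pr * real N * (\<Sum>w\<in>UNIV. u w * u w)
      - 2 * (\<Sum>j<N. \<Sum>w\<in>UNIV. u w * (\<Sum>t\<in>UNIV. u (w + sc t (fst (a j))))))"
    unfolding Drj by (simp add: sum_distrib_left sum_subtractf algebra_simps)
  also have "\<dots> \<ge> pr * (2 * pr * real N * (\<Sum>w\<in>UNIV. u w * u w) - 2 * (pr * real N * \<beta> * (\<Sum>w\<in>UNIV. u w * u w)))"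
    using key pr0 by (intro mult_left_mono) auto
  finally have "pr * (2 * pr * real N * (\<Sum>w\<in>UNIV. u w * u w) - 2 * (pr * real N * \<beta> * (\<Sum>w\<in>UNIV. u w * u w))) \<le> (\<Sum>j<N. Dr (a j) h)" .
  then show ?thesis unfolding iph pr_def[symmetric] by (simp add: algebra_simps)
qed

lemma cinv_diff: "cinv A \<Longrightarrow> cinv B \<Longrightarrow> cinv (\<lambda>x. A x - B x)"
  unfolding cinv_def by metis
lemma cmz_diff: "cmz A \<Longrightarrow> cmz B \<Longrightarrow> cmz (\<lambda>x. A x - B x)"
  unfolding cmz_def by (simp add: sum_subtractf)

lemma Dr_ip: "Dr a f = (\<Sum>t\<in>UNIV. ip (\<lambda>x. f x - f (mu x (e a t))) (\<lambda>x. f x - f (mu x (e a t))))"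
  unfolding Dr_def ip_def power2_eq_square by (rule sum.swap)

lemma Dr_split:
  assumes A: "cinv A" and B: "cmz B"
  shows "Dr a (\<lambda>x. A x + B x) = Dr a A + Dr a B"
proof -
  have "ip (\<lambda>x. (A x + B x) - (A (mu x (e a t)) + B (mu x (e a t)))) (\<lambda>x. (A x + B x) - (A (mu x (e a t)) + B (mu x (e a t))))
      = ip (\<lambda>x. A x - A (mu x (e a t))) (\<lambda>x. A x - A (mu x (e a t))) + ip (\<lambda>x. B x - B (mu x (e a t))) (\<lambda>x. B x - B (mu x (e a t)))" for t
  proof -
    have cA: "cinv (\<lambda>x. A x - A (mu x (e a t)))" by (rule cinv_diff[OF A cinv_mur[OF A]])
    have cB: "cmz (\<lambda>x. B x - B (mu x (e a t)))" by (rule cmz_diff[OF B cmz_mur[OF B]])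
    have eq: "(\<lambda>x. (A x + B x) - (A (mu x (e a t)) + B (mu x (e a t))))
       = (\<lambda>x. (A x - A (mu x (e a t))) + (B x - B (mu x (e a t))))" by (simp add: fun_eq_iff)
    show ?thesis unfolding eq by (rule ip_pyth[OF cA cB])
  qed
  then show ?thesis unfolding Dr_ip by (simp add: sum.distrib)
qed

lemma R_bound:
  assumes odd: "odd CARD('p)"
    and hyp: "\<And>L. hyperplaneW L \<Longrightarrow> real (card {j\<in>{..<N}. fst (a j) \<in> L}) / real N \<le> \<beta>"
    and N: "N \<ge> 1" and b1: "\<beta> < 1"
    and g1: "\<gamma> \<le> 1 - \<beta>" and g2: "2 * \<gamma> \<le> (1 - \<beta>) * (1 - real CARD('p) powr (-1/2))"
    and m: "m = (\<Sum>x\<in>UNIV. f x) / real CARD(('n, 'p) heis)"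
  shows "2 * real CARD('p) * real N * \<gamma> * ip (\<lambda>x. f x - m) (\<lambda>x. f x - m) \<le> (\<Sum>j<N. Dr (a j) f)"
proof -
  define pr where "pr = real CARD('p)"
  have pr0: "pr > 0" unfolding pr_def by simp
  define g where "g x = f x - m" for x
  have Drg: "Dr b g = Dr b f" for b unfolding Dr_def g_def by simp
  have g0s: "(\<Sum>x\<in>UNIV. g x) = 0" unfolding g_def m by (simp add: sum_subtractf)
  define g0 where "g0 x = (1 / pr) * (\<Sum>s\<in>UNIV. g (fst x, s))" for x :: "('n, 'p) heis"
  define g1 where "g1 x = g x - g0 x" for x
  have ci: "cinv g0" unfolding cinv_def g0_def by simp
  have cz: "cmz g1"
  proof -
    have "(\<Sum>s\<in>UNIV. g1 (v, s)) = 0" for v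
    proof -
      have "(\<Sum>s\<in>(UNIV::'p mod_ring set). g0 (v, s)) = (\<Sum>s\<in>UNIV. g (v, s))"
        unfolding g0_def pr_def by simp
      then show ?thesis unfolding g1_def by (simp add: sum_subtractf)
    qed
    then show ?thesis unfolding cmz_def by blast
  qed
  have g00: "(\<Sum>x\<in>UNIV. g0 x) = 0"
  proof -
    have "(\<Sum>x\<in>UNIV. g0 x) = (\<Sum>v\<in>UNIV. \<Sum>s\<in>(UNIV::'p mod_ring set). (1 / pr) * (\<Sum>s'\<in>UNIV. g (v, s')))"
      unfolding sum_pairs g0_def by simp
    also have "\<dots> = (\<Sum>v\<in>UNIV. \<Sum>s'\<in>UNIV. g (v, s'))" unfolding pr_def by simp
    also have "\<dots> = 0" using g0s unfolding sum_pairs by simp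
    finally show ?thesis .
  qed
  have gsplit: "g = (\<lambda>x. g0 x + g1 x)" unfolding g1_def by simp
  have ipg: "ip g g = ip g0 g0 + ip g1 g1" unfolding gsplit by (rule ip_pyth[OF ci cz])
  have Drs: "Dr b g = Dr b g0 + Dr b g1" for b unfolding gsplit by (rule Dr_split[OF ci cz])
  have ab: "real N * (1 - \<beta>) * (2 * pr * ip g0 g0) \<le> (\<Sum>j<N. Dr (a j) g0)"
    unfolding pr_def by (rule abel_bound[OF ci g00 hyp N])
  have na: "real N * (1 - \<beta>) * (pr * (1 - real CARD('p) powr (-1/2)) * ip g1 g1) \<le> (\<Sum>j<N. Dr (a j) g1)"
    unfolding pr_def by (rule nonab_bound[OF odd cz hyp N])
  have i0: "ip g0 g0 \<ge> 0" "ip g1 g1 \<ge> 0" by (rule ip_nonneg)+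
  have Nn: "real N \<ge> 0" by simp
  have "2 * pr * real N * \<gamma> * ip g0 g0 \<le> real N * (1 - \<beta>) * (2 * pr * ip g0 g0)"
  proof -
    have "\<gamma> * (2 * pr * real N * ip g0 g0) \<le> (1 - \<beta>) * (2 * pr * real N * ip g0 g0)"
      using g1 pr0 i0 by (intro mult_right_mono) auto
    then show ?thesis by (simp add: algebra_simps)
  qed
  moreover have "2 * pr * real N * \<gamma> * ip g1 g1 \<le> real N * (1 - \<beta>) * (pr * (1 - real CARD('p) powr (-1/2)) * ip g1 g1)"
  proof -
    have "(2 * \<gamma>) * (pr * real N * ip g1 g1) \<le> ((1 - \<beta>) * (1 - real CARD('p) powr (-1/2))) * (pr * real N * ip g1 g1)"
      using g2 pr0 i0 by (intro mult_right_mono) auto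
    then show ?thesis by (simp add: algebra_simps)
  qed
  ultimately have "2 * pr * real N * \<gamma> * ip g g \<le> (\<Sum>j<N. Dr (a j) g0) + (\<Sum>j<N. Dr (a j) g1)"
    using ab na unfolding ipg by (simp add: algebra_simps)
  also have "\<dots> = (\<Sum>j<N. Dr (a j) g)" by (simp only: Drs sum.distrib)
  also have "\<dots> = (\<Sum>j<N. Dr (a j) f)" by (simp only: Drg)
  finally show ?thesis unfolding g_def pr_def .
qed

lemma mu_cancel_l: "mu (hinv x) (mu x g) = g"
  by (simp add: mu_assoc[symmetric])
lemma mu_cancel_l2: "mu x (mu (hinv x) g) = g"
  by (simp add: mu_assoc[symmetric])

lemma bij_mul: "bij (\<lambda>g. mu x g)"
  by (rule bij_betwI[where g="\<lambda>g. mu (hinv x) g"]) (auto simp: mu_cancel_l mu_cancel_l2)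

lemma sum_mul: "(\<Sum>g\<in>UNIV. F (mu x g)) = (\<Sum>g\<in>UNIV. (F g :: real))"
  using sum.reindex_bij_betw[OF bij_mul, of F] by simp

lemma Rker_eq: "Rker (hmul \<omega>) \<nu> x y = \<nu> (mu (hinv x) y)"
proof -
  have "{g. mu x g = y} = {mu (hinv x) y}" by (auto simp: mu_cancel_l mu_cancel_l2)
  then show ?thesis unfolding Rker_def by simp
qed

lemma Lker_eq: "Lker (hmul \<omega>) \<nu> x y = \<nu> (mu y (hinv x))"
proof -
  have "{g. mu g x = y} = {mu y (hinv x)}" by (auto simp: mu_cancel_r mu_cancel_r2)
  then show ?thesis unfolding Lker_def by simp
qed

lemma unif_gen: "(\<Sum>g\<in>UNIV. unif S g * F g) = (\<Sum>g\<in>S. F g) / real (card (S :: ('n, 'p) heis set))"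
proof -
  have "(\<Sum>g\<in>UNIV. unif S g * F g) = (\<Sum>g\<in>UNIV. if g \<in> S then F g / real (card S) else 0)"
    unfolding unif_def by (rule sum.cong) auto
  also have "\<dots> = (\<Sum>g\<in>S. F g / real (card S))" by (simp add: sum.If_cases)
  finally show ?thesis by (simp add: sum_divide_distrib)
qed

lemma unif_sum: "(\<Sum>g\<in>UNIV. unif (cyc \<omega> a) g * F g) = (1 / real CARD('p)) * (\<Sum>t\<in>UNIV. F (e a t))"
proof (cases "a = (0,0)")
  case True
  have ea: "e a t = (0,0)" for t using True by (simp add: e_def)
  have "cyc \<omega> a = {(0,0)}" unfolding cyc_e using ea by auto
  then show ?thesis using ea by (simp add: unif_gen)
next
  case False
  have inj: "inj (e a)"
  proof (rule injI)
    fix s t assume st: "e a s = e a t"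
    show "s = t"
    proof (cases "fst a = 0")
      case True
      then have "snd a \<noteq> 0" using False by (cases a) auto
      moreover have "s * snd a = t * snd a" using st by (simp add: e_def)
      ultimately show ?thesis by simp
    next
      case False
      then obtain i where i: "fst a i \<noteq> 0" by (auto simp: fun_eq_iff)
      have "sc s (fst a) i = sc t (fst a) i" using st by (simp add: e_def)
      then have "s * fst a i = t * fst a i" by (simp add: sc_def)
      then show ?thesis using i by simp
    qed
  qed
  have card: "card (cyc \<omega> a) = CARD('p)" unfolding cyc_e using inj by (simp add: card_image)
  have "(\<Sum>g\<in>cyc \<omega> a. F g) = (\<Sum>t\<in>UNIV. F (e a t))"
    unfolding cyc_e using inj by (simp add: sum.reindex)
  then show ?thesis by (simp add: unif_gen card)
qed

lemma sum_nu:
  assumes nu: "\<nu> = (\<lambda>g. (1 / real N) * (\<Sum>j<N. unif (cyc \<omega> (a j)) g))"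
  shows "(\<Sum>g\<in>UNIV. \<nu> g * F g) = (1 / real N) * (1 / real CARD('p)) * (\<Sum>j<N. \<Sum>t\<in>UNIV. F (e (a j) t))"
proof -
  have "(\<Sum>g\<in>UNIV. \<nu> g * F g) = (1 / real N) * (\<Sum>j<N. \<Sum>g\<in>UNIV. unif (cyc \<omega> (a j)) g * F g)"
    unfolding nu by (simp add: sum_distrib_left sum_distrib_right sum.swap[of _ "{..<N}"] mult.assoc)
  also have "\<dots> = (1 / real N) * (1 / real CARD('p)) * (\<Sum>j<N. \<Sum>t\<in>UNIV. F (e (a j) t))"
    by (simp add: unif_sum sum_distrib_left)
  finally show ?thesis .
qed

lemma Dl_eq: "(\<Sum>x\<in>UNIV. \<Sum>t\<in>UNIV. (f x - f (mu (e a t) x))\<^sup>2) = Dr a (\<lambda>x. f (hinv x))"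
proof -
  have "Dr a (\<lambda>x. f (hinv x)) = (\<Sum>x\<in>UNIV. \<Sum>t\<in>UNIV. (f (hinv x) - f (mu (e a (- t)) (hinv x)))\<^sup>2)"
    unfolding Dr_def by (simp add: hinv_mu hinv_e)
  also have "\<dots> = (\<Sum>x\<in>UNIV. \<Sum>t\<in>UNIV. (f x - f (mu (e a (- t)) x))\<^sup>2)"
    using sum_hinv[of "\<lambda>y. \<Sum>t\<in>UNIV. (f y - f (mu (e a (- t)) y))\<^sup>2"] by simp
  also have "\<dots> = (\<Sum>x\<in>UNIV. \<Sum>t\<in>UNIV. (f x - f (mu (e a t) x))\<^sup>2)"
    by (rule sum.cong[OF refl], rule sum_neg[where F="\<lambda>t. (f _ - f (mu (e a t) _))\<^sup>2"])
  finally show ?thesis by simp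
qed

lemma dirichlet_eq:
  assumes nu: "\<nu> = (\<lambda>g. (1 / real N) * (\<Sum>j<N. unif (cyc \<omega> (a j)) g))"
  shows "dirichlet (\<lambda>x y. (1/2) * (Rker (hmul \<omega>) \<nu> x y + Lker (hmul \<omega>) \<nu> x y)) (\<lambda>x::('n, 'p) heis. 1 / real CARD(('n, 'p) heis)) f
    = (1 / real CARD(('n, 'p) heis)) * ((1 / real N) * (1 / real CARD('p)) / 4)
       * ((\<Sum>j<N. Dr (a j) f) + (\<Sum>j<N. Dr (a j) (\<lambda>x. f (hinv x))))"
proof -
  define C where "C = real CARD(('n, 'p) heis)"
  define c where "c = (1 / real N) * (1 / real CARD('p))"
  have R: "(\<Sum>y\<in>UNIV. \<nu> (mu (hinv x) y) * (f x - f y)\<^sup>2) = c * (\<Sum>j<N. \<Sum>t\<in>UNIV. (f x - f (mu x (e (a j) t)))\<^sup>2)" for x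
  proof -
    have "(\<Sum>y\<in>UNIV. \<nu> (mu (hinv x) y) * (f x - f y)\<^sup>2) = (\<Sum>g\<in>UNIV. \<nu> (mu (hinv x) (mu x g)) * (f x - f (mu x g))\<^sup>2)"
      by (rule sum_mul[symmetric])
    also have "\<dots> = (\<Sum>g\<in>UNIV. \<nu> g * (f x - f (mu x g))\<^sup>2)" by (simp only: mu_cancel_l)
    also have "\<dots> = c * (\<Sum>j<N. \<Sum>t\<in>UNIV. (f x - f (mu x (e (a j) t)))\<^sup>2)"
      unfolding c_def by (rule sum_nu[OF nu])
    finally show ?thesis .
  qed
  have L: "(\<Sum>y\<in>UNIV. \<nu> (mu y (hinv x)) * (f x - f y)\<^sup>2) = c * (\<Sum>j<N. \<Sum>t\<in>UNIV. (f x - f (mu (e (a j) t) x))\<^sup>2)" for x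
  proof -
    have "(\<Sum>y\<in>UNIV. \<nu> (mu y (hinv x)) * (f x - f y)\<^sup>2) = (\<Sum>g\<in>UNIV. \<nu> (mu (mu g x) (hinv x)) * (f x - f (mu g x))\<^sup>2)"
      by (rule sum_mur[symmetric])
    also have "\<dots> = (\<Sum>g\<in>UNIV. \<nu> g * (f x - f (mu g x))\<^sup>2)" by (simp only: mu_cancel_r)
    also have "\<dots> = c * (\<Sum>j<N. \<Sum>t\<in>UNIV. (f x - f (mu (e (a j) t) x))\<^sup>2)"
      unfolding c_def by (rule sum_nu[OF nu])
    finally show ?thesis .
  qed
  have "dirichlet (\<lambda>x y. (1/2) * (Rker (hmul \<omega>) \<nu> x y + Lker (hmul \<omega>) \<nu> x y)) (\<lambda>x::('n, 'p) heis. 1 / real CARD(('n, 'p) heis)) f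
      = (1 / C) / 4 * (\<Sum>x\<in>UNIV. (\<Sum>y\<in>UNIV. \<nu> (mu (hinv x) y) * (f x - f y)\<^sup>2) + (\<Sum>y\<in>UNIV. \<nu> (mu y (hinv x)) * (f x - f y)\<^sup>2))"
    unfolding dirichlet_def Rker_eq Lker_eq C_def
    by (simp add: sum_distrib_left sum.distrib algebra_simps)
  also have "\<dots> = (1 / C) / 4 * (c * (\<Sum>j<N. Dr (a j) f) + c * (\<Sum>j<N. Dr (a j) (\<lambda>x. f (hinv x))))"
  proof -
    have "(\<Sum>x\<in>UNIV. (\<Sum>y\<in>UNIV. \<nu> (mu (hinv x) y) * (f x - f y)\<^sup>2) + (\<Sum>y\<in>UNIV. \<nu> (mu y (hinv x)) * (f x - f y)\<^sup>2))
        = c * (\<Sum>x\<in>UNIV. \<Sum>j<N. \<Sum>t\<in>UNIV. (f x - f (mu x (e (a j) t)))\<^sup>2)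
          + c * (\<Sum>x\<in>UNIV. \<Sum>j<N. \<Sum>t\<in>UNIV. (f x - f (mu (e (a j) t) x))\<^sup>2)"
      by (simp only: R L sum.distrib sum_distrib_left)
    also have "(\<Sum>x\<in>UNIV. \<Sum>j<N. \<Sum>t\<in>UNIV. (f x - f (mu x (e (a j) t)))\<^sup>2) = (\<Sum>j<N. Dr (a j) f)"
      unfolding Dr_def by (rule sum.swap)
    also have "(\<Sum>x\<in>UNIV. \<Sum>j<N. \<Sum>t\<in>UNIV. (f x - f (mu (e (a j) t) x))\<^sup>2) = (\<Sum>j<N. Dr (a j) (\<lambda>x. f (hinv x)))"
      unfolding Dl_eq[symmetric] by (rule sum.swap)
    finally show ?thesis by simp
  qed
  finally show ?thesis unfolding C_def c_def by (simp add: algebra_simps)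
qed

lemma var_eq: "variance_wrt (\<lambda>x::('n, 'p) heis. 1 / real CARD(('n, 'p) heis)) f
   = (1 / real CARD(('n, 'p) heis)) * ip (\<lambda>x. f x - (\<Sum>x\<in>UNIV. f x) / real CARD(('n, 'p) heis)) (\<lambda>x. f x - (\<Sum>x\<in>UNIV. f x) / real CARD(('n, 'p) heis))"
proof -
  have m: "(\<Sum>y\<in>UNIV. 1 / real CARD(('n, 'p) heis) * f y) = (\<Sum>x\<in>UNIV. f x) / real CARD(('n, 'p) heis)"
    by (simp add: sum_divide_distrib)
  show ?thesis unfolding variance_wrt_def ip_def m by (simp add: sum_distrib_left power2_eq_square)
qed

lemma card_heis: "real CARD(('n, 'p) heis) \<ge> 2"
proof -
  have h1: "CARD(('n, 'p) vecW) \<ge> 1" by (simp add: Suc_le_eq)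
  have h2: "CARD('p) \<ge> 2" using prime_card[where 'a='p] prime_ge_2_nat by blast
  have n: "1 * 2 \<le> CARD(('n, 'p) vecW) * CARD('p)" using mult_le_mono[OF h1 h2] .
  have "CARD(('n, 'p) heis) = CARD(('n, 'p) vecW) * CARD('p)" by simp
  then have r: "real (1 * 2) \<le> real CARD(('n, 'p) heis)" using n by (simp only: of_nat_le_iff)
  then show ?thesis by simp
qed

lemma main_ineq:
  assumes odd: "odd CARD('p)"
    and hyp: "\<And>L. hyperplaneW L \<Longrightarrow> real (card {j\<in>{..<N}. fst (a j) \<in> L}) / real N \<le> \<beta>"
    and N: "N \<ge> 1" and b0: "1 / real CARD('p) < \<beta>" and b1: "\<beta> < 1"
    and nu: "\<nu> = (\<lambda>g. (1 / real N) * (\<Sum>j<N. unif (cyc \<omega> (a j)) g))"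
    and Kd: "K = (\<lambda>x y. (1/2) * (Rker (hmul \<omega>) \<nu> x y + Lker (hmul \<omega>) \<nu> x y))"
    and rho: "\<rho> = (\<lambda>x::('n, 'p) heis. 1 / real CARD(('n, 'p) heis))"
    and gam: "\<gamma> = min (1 - \<beta>) ((1 - \<beta>)\<^sup>2 / 2 * (1 - real CARD('p) powr (-1/2)))"
  shows "\<gamma> > 0 \<and> spectral_gap K \<rho> \<ge> \<gamma>"
proof -
  define pr where "pr = real CARD('p)"
  define s where "s = real CARD('p) powr (-1/2)"
  define C where "C = real CARD(('n, 'p) heis)"
  have pr1: "pr > 1" unfolding pr_def using prime_card[where 'a='p] prime_gt_1_nat by simp
  have se: "s = 1 / sqrt pr" unfolding s_def pr_def by (simp add: powr_minus_divide powr_half_sqrt)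
  have sq: "sqrt pr > 1" using pr1 by simp
  have s1: "s < 1" unfolding se using sq by simp
  have s0: "s > 0" unfolding se using sq by simp
  have bpos: "\<beta> > 0" using b0 pr1 unfolding pr_def by (smt (verit) divide_pos_pos of_nat_0_less_iff zero_less_card_finite)
  have gpos: "\<gamma> > 0" unfolding gam s_def[symmetric] using b1 s1 by simp
  have g1: "\<gamma> \<le> 1 - \<beta>" unfolding gam by simp
  have g2: "2 * \<gamma> \<le> (1 - \<beta>) * (1 - s)"
  proof -
    have "\<gamma> \<le> (1 - \<beta>)\<^sup>2 / 2 * (1 - s)" unfolding gam s_def[symmetric] by (rule min.cobounded2)
    then have "2 * \<gamma> \<le> 2 * ((1 - \<beta>)\<^sup>2 / 2 * (1 - s))" by simp
    also have "\<dots> = (1 - \<beta>)\<^sup>2 * (1 - s)" by simp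
    finally have "2 * \<gamma> \<le> (1 - \<beta>)\<^sup>2 * (1 - s)" .
    also have "\<dots> \<le> (1 - \<beta>) * (1 - s)"
    proof (rule mult_right_mono)
      show "(1 - \<beta>)\<^sup>2 \<le> 1 - \<beta>" using b1 bpos by (simp add: power2_eq_square mult_le_cancel_right1)
      show "0 \<le> 1 - s" using s1 by simp
    qed
    finally show ?thesis .
  qed
  have C2: "C \<ge> 2" unfolding C_def by (rule card_heis)
  have ineq: "\<gamma> * variance_wrt \<rho> f \<le> dirichlet K \<rho> f" for f
  proof -
    define m where "m = (\<Sum>x\<in>UNIV. f x) / C"
    define f' where "f' x = f (hinv x)" for x
    have sf: "(\<Sum>x\<in>UNIV. f' x) = (\<Sum>x\<in>UNIV. f x)" unfolding f'_def by (rule sum_hinv)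
    have m': "m = (\<Sum>x\<in>UNIV. f' x) / C" unfolding m_def sf ..
    define V where "V = ip (\<lambda>x. f x - m) (\<lambda>x. f x - m)"
    have V': "ip (\<lambda>x. f' x - m) (\<lambda>x. f' x - m) = V"
      unfolding V_def ip_def f'_def by (rule sum_hinv[where F="\<lambda>y. (f y - m) * (f y - m)"])
    have mC: "m = (\<Sum>x\<in>UNIV. f x) / real CARD(('n, 'p) heis)" unfolding m_def C_def ..
    have mC': "m = (\<Sum>x\<in>UNIV. f' x) / real CARD(('n, 'p) heis)" unfolding m' C_def ..
    have R1: "2 * pr * real N * \<gamma> * V \<le> (\<Sum>j<N. Dr (a j) f)"
      unfolding pr_def V_def by (rule R_bound[OF odd hyp N b1 g1 g2[unfolded s_def] mC])
    have R2: "2 * pr * real N * \<gamma> * V \<le> (\<Sum>j<N. Dr (a j) f')"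
      unfolding pr_def V'[symmetric] by (rule R_bound[OF odd hyp N b1 g1 g2[unfolded s_def] mC'])
    have var: "variance_wrt \<rho> f = (1 / C) * V"
      unfolding rho V_def m_def C_def by (rule var_eq)
    have dir: "dirichlet K \<rho> f = (1 / C) * ((1 / real N) * (1 / pr) / 4) * ((\<Sum>j<N. Dr (a j) f) + (\<Sum>j<N. Dr (a j) f'))"
      unfolding Kd rho C_def pr_def f'_def by (rule dirichlet_eq[OF nu])
    have cpos: "(1 / C) * ((1 / real N) * (1 / pr) / 4) \<ge> 0" using C2 pr1 by simp
    have "(1 / C) * ((1 / real N) * (1 / pr) / 4) * (4 * pr * real N * \<gamma> * V)
        \<le> (1 / C) * ((1 / real N) * (1 / pr) / 4) * ((\<Sum>j<N. Dr (a j) f) + (\<Sum>j<N. Dr (a j) f'))"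
      using R1 R2 cpos by (intro mult_left_mono) auto
    moreover have "(1 / C) * ((1 / real N) * (1 / pr) / 4) * (4 * pr * real N * \<gamma> * V) = \<gamma> * ((1 / C) * V)"
      using pr1 N by (simp add: field_simps)
    ultimately show ?thesis unfolding var dir by simp
  qed
  define f0 where "f0 x = (if x = (0,0) then 1 else (0::real))" for x :: "('n, 'p) heis"
  have varpos: "variance_wrt \<rho> f0 > 0"
  proof -
    define mm where "mm = (\<Sum>y\<in>UNIV. \<rho> y * f0 y)"
    have mm: "mm = 1 / C" unfolding mm_def rho f0_def C_def by (simp add: if_distrib cong: if_cong)
    have "\<rho> (0,0) * (f0 (0,0) - mm)\<^sup>2 \<le> variance_wrt \<rho> f0"
      unfolding variance_wrt_def mm_def[symmetric]
      by (rule member_le_sum) (auto simp: rho)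
    moreover have "\<rho> (0,0) * (f0 (0,0) - mm)\<^sup>2 > 0"
      unfolding mm f0_def rho C_def[symmetric] using C2 by simp
    ultimately show ?thesis by linarith
  qed
  have bdd: "bdd_above {\<gamma>'. \<forall>f. \<gamma>' * variance_wrt \<rho> f \<le> dirichlet K \<rho> f}"
  proof (rule bdd_aboveI)
    fix x assume "x \<in> {\<gamma>'. \<forall>f. \<gamma>' * variance_wrt \<rho> f \<le> dirichlet K \<rho> f}"
    then have "x * variance_wrt \<rho> f0 \<le> dirichlet K \<rho> f0" by blast
    then show "x \<le> dirichlet K \<rho> f0 / variance_wrt \<rho> f0" using varpos by (simp add: pos_le_divide_eq)
  qed
  have "\<gamma> \<le> spectral_gap K \<rho>" unfolding spectral_gap_def
    by (rule cSup_upper) (use ineq bdd in auto)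
  then show ?thesis using gpos by simp
qed

end

theorem proposition4p14:
  fixes \<omega> :: "('n::finite, 'p::prime_card) vecW \<Rightarrow> ('n, 'p) vecW \<Rightarrow> 'p mod_ring"
    and \<beta> :: real and N :: nat and a :: "nat \<Rightarrow> ('n, 'p) heis"
  assumes p_odd: "odd CARD('p)"
    and dimW: "even CARD('n)" "CARD('n) \<ge> 2"
    and form: "alt_form \<omega>"
    and beta: "1 / real CARD('p) < \<beta>" "\<beta> < 1"
    and N: "N \<ge> 1"
    and hyp: "\<And>L. hyperplaneW L \<Longrightarrow> real (card {j\<in>{..<N}. fst (a j) \<in> L}) / real N \<le> \<beta>"
  shows "let \<nu> = (\<lambda>g. (1 / real N) * (\<Sum>j<N. unif (cyc \<omega> (a j)) g));
             K = (\<lambda>x y. (1/2) * (Rker (hmul \<omega>) \<nu> x y + Lker (hmul \<omega>) \<nu> x y));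
             \<rho> = (\<lambda>x::('n, 'p) heis. 1 / real CARD(('n, 'p) heis));
             \<gamma> = min (1 - \<beta>) ((1 - \<beta>)\<^sup>2 / 2 * (1 - real CARD('p) powr (-1/2)))
         in \<gamma> > 0 \<and> spectral_gap K \<rho> \<ge> \<gamma>"
  unfolding Let_def
  by (rule main_ineq[OF form p_odd hyp N beta(1) beta(2) refl refl refl refl])

end
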